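(* For every integer $N$, the polynomials $\phi_N(y,z)$ satisfy $$\phi_{N+1}(y,z)\phi_N(y/q,z)+q^{N+1}z\,\phi_{N+1}(y/q,z)\phi_N(y,z)=(1+z)\phi_{N+1}(y,qz)\phi_N(y/q,z/q),$$ $$q^{-N-1}z\,\phi_{N+1}(y,z)\phi_N(y/q,z)+\phi_{N+1}(y/q,z)\phi_N(y,z)=(1+z)\phi_{N+1}(y/q,z/q)\phi_N(y,qz),$$ $$z\,\phi_{N+1}(y/q,z/q)\phi_N(y,z)+y\,\phi_{N+1}(y,z)\phi_N(y/q,z/q)=(y+z)\phi_{N+1}(y,z/q)\phi_N(y/q,z),$$ $$y\,\phi_{N+1}(y/q,z/q)\phi_N(y,z)+z\,\phi_{N+1}(y,z)\phi_N(y/q,z/q)=(y+z)\phi_{N+1}(y/q,z)\phi_N(y,z/q).$$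
   Context: $q$ is a fixed nonzero complex constant that is not a root of unity; $y,z$ are variables. For $k\in\mathbb{Z}$ the polynomials $p_k(y,z)$ are defined by the generating function $\sum_{n\ge 0}p_n(y,z)t^n=\frac{(-(1-q)t;q)_\infty}{((1-q)yt;q)_\infty((1-q)zt;q)_\infty}$, with $(a;q)_\infty=\prod_{i\ge0}(1-aq^i)$, and $p_k=0$ for $k<0$; equivalently $p_n(y,z)=(1-q)^n\sum_{a+b+c=n}\frac{y^a z^b q^{c(c-1)/2}}{(q;q)_a(q;q)_b(q;q)_c}$ with $(q;q)_m=\prod_{j=1}^m(1-q^j)$. For $N>0$, $\phi_N(y,z)=\det\big(p_{N-2i+j+1}(y,z)\big)_{i,j=1}^N$; $\phi_0=1$; for $N<0$, $\phi_N=(-1)^{N(N+1)/2}\phi_{-N-1}$. *)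

theory Defs
  imports Complex_Main "Jordan_Normal_Form.Determinant"
begin

definition qpoch :: "complex \<Rightarrow> nat \<Rightarrow> complex" where
  "qpoch q m = (\<Prod>j\<in>{1..m}. 1 - q ^ j)"

definition pp :: "complex \<Rightarrow> int \<Rightarrow> complex \<Rightarrow> complex \<Rightarrow> complex" where
  "pp q n y z = (if n < 0 then 0 else
     (1 - q) ^ nat n *
       (\<Sum>a\<le>nat n. \<Sum>b\<le>nat n - a.
          let c = nat n - a - b in
          y ^ a * z ^ b * q ^ (c * (c - 1) div 2) / (qpoch q a * qpoch q b * qpoch q c)))"

definition phi_nat :: "complex \<Rightarrow> nat \<Rightarrow> complex \<Rightarrow> complex \<Rightarrow> complex" where
  "phi_nat q N y z = (if N = 0 then 1 else
     det (mat N N (\<lambda>(i, j). pp q (int N - 2 * (int i + 1) + (int j + 1) + 1) y z)))"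

definition phi :: "complex \<Rightarrow> int \<Rightarrow> complex \<Rightarrow> complex \<Rightarrow> complex" where
  "phi q N y z = (if N \<ge> 0 then phi_nat q (nat N) y z
     else (-1) ^ nat ((N * (N + 1)) div 2) * phi_nat q (nat (- N - 1)) y z)"

end

theory Submission
  imports Defs "HOL-Computational_Algebra.Formal_Power_Series"
begin

definition W :: "nat \<Rightarrow> nat \<Rightarrow> nat \<Rightarrow> (nat \<Rightarrow> nat \<Rightarrow> complex) \<Rightarrow> (nat \<Rightarrow> complex) \<Rightarrow> (nat \<Rightarrow> complex) \<Rightarrow> complex mat" where
  "W m p p' s x y = mat m m (\<lambda>(i,j). if j = p then x i else if j = p' then y i else s j i)"

lemma W_carrier[simp]: "W m p p' s x y \<in> carrier_mat m m"
  unfolding W_def by simp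

lemma W_index[simp]: "i < m \<Longrightarrow> j < m \<Longrightarrow> W m p p' s x y $$ (i,j) = (if j = p then x i else if j = p' then y i else s j i)"
  unfolding W_def by simp

lemma W_lin:
  assumes pm: "p < m" and pm': "p' < m" and pp: "p \<noteq> p'"
  shows "det (W m p p' s a x) = (\<Sum>i<m. x i * cofactor (W m p p' s a (\<lambda>_. 0)) i p')"
proof -
  have "det (W m p p' s a x) = (\<Sum>i<m. W m p p' s a x $$ (i,p') * cofactor (W m p p' s a x) i p')"
    by (rule laplace_expansion_column[OF W_carrier pm'])
  also have "\<dots> = (\<Sum>i<m. x i * cofactor (W m p p' s a (\<lambda>_. 0)) i p')"
  proof (rule sum.cong[OF refl])
    fix i assume i: "i \<in> {..<m}"
    have "mat_delete (W m p p' s a x) i p' = mat_delete (W m p p' s a (\<lambda>_. 0)) i p'"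
      unfolding mat_delete_def W_def by (rule eq_matI) auto
    thus "W m p p' s a x $$ (i,p') * cofactor (W m p p' s a x) i p' = x i * cofactor (W m p p' s a (\<lambda>_. 0)) i p'"
      using i pm' pp unfolding cofactor_def by simp
  qed
  finally show ?thesis .
qed

lemma cramer_sum:
  fixes V :: "complex mat"
  assumes V: "V \<in> carrier_mat m m" and i: "i < m"
  shows "det V * b i = (\<Sum>k<m. V $$ (i,k) * det (replace_col V (vec m b) k))"
proof -
  have rc: "det (replace_col V (vec m b) k) = (\<Sum>l<m. b l * cofactor V l k)" if k: "k < m" for k
  proof -
    have c: "replace_col V (vec m b) k \<in> carrier_mat m m" using V unfolding replace_col_def by auto
    have "det (replace_col V (vec m b) k) = (\<Sum>l<m. replace_col V (vec m b) k $$ (l,k) * cofactor (replace_col V (vec m b) k) l k)"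
      by (rule laplace_expansion_column[OF c k])
    also have "\<dots> = (\<Sum>l<m. b l * cofactor V l k)"
    proof (rule sum.cong[OF refl])
      fix l assume l: "l \<in> {..<m}"
      have "mat_delete (replace_col V (vec m b) k) l k = mat_delete V l k"
        unfolding mat_delete_def replace_col_def using V by (intro eq_matI) auto
      thus "replace_col V (vec m b) k $$ (l,k) * cofactor (replace_col V (vec m b) k) l k = b l * cofactor V l k"
        using l k V unfolding cofactor_def replace_col_def by auto
    qed
    finally show ?thesis .
  qed
  have adj: "(\<Sum>k<m. V $$ (i,k) * cofactor V l k) = (if i = l then det V else 0)" if l: "l < m" for l
  proof -
    have "(V * adj_mat V) $$ (i,l) = (\<Sum>k<m. V $$ (i,k) * cofactor V l k)"
      unfolding times_mat_def scalar_prod_def adj_mat_def using i l V by (auto intro: sum.cong)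
    moreover have "(V * adj_mat V) $$ (i,l) = (if i = l then det V else 0)"
      using adj_mat(2)[OF V] i l by auto
    ultimately show ?thesis by simp
  qed
  have "(\<Sum>k<m. V $$ (i,k) * det (replace_col V (vec m b) k)) = (\<Sum>k<m. V $$ (i,k) * (\<Sum>l<m. b l * cofactor V l k))"
    by (rule sum.cong, simp, simp add: rc)
  also have "\<dots> = (\<Sum>l<m. b l * (\<Sum>k<m. V $$ (i,k) * cofactor V l k))"
    by (simp add: sum_distrib_left sum_distrib_right mult_ac, rule sum.swap)
  also have "\<dots> = (\<Sum>l<m. b l * (if i = l then det V else 0))"
    by (rule sum.cong, simp, simp add: adj)
  also have "\<dots> = b i * det V" using i by (simp add: if_distrib sum.delta cong: if_cong)
  finally show ?thesis by simp
qed

lemma plucker: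
  assumes pm: "p < m" and pm': "p' < m" and pp: "p \<noteq> p'"
  shows "det (W m p p' s c d) * det (W m p p' s a b) =
         det (W m p p' s b d) * det (W m p p' s a c) + det (W m p p' s c b) * det (W m p p' s a d)"
proof -
  define V where "V = W m p p' s c d"
  have V: "V \<in> carrier_mat m m" unfolding V_def by simp
  define C where "C i = cofactor (W m p p' s a (\<lambda>_. 0)) i p'" for i
  have L: "det (W m p p' s a x) = (\<Sum>i<m. x i * C i)" for x
    unfolding C_def by (rule W_lin[OF pm pm' pp])
  define R where "R k = replace_col V (vec m b) k" for k
  have "det V * det (W m p p' s a b) = (\<Sum>i<m. C i * (det V * b i))"
    unfolding L by (simp add: sum_distrib_left mult_ac)
  also have "\<dots> = (\<Sum>i<m. C i * (\<Sum>k<m. V $$ (i,k) * det (R k)))"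
    unfolding R_def by (rule sum.cong, simp, simp add: cramer_sum[OF V])
  also have "\<dots> = (\<Sum>k<m. det (R k) * (\<Sum>i<m. V $$ (i,k) * C i))"
    by (simp add: sum_distrib_left sum_distrib_right mult_ac, rule sum.swap)
  also have "\<dots> = (\<Sum>k<m. det (R k) * det (W m p p' s a (\<lambda>i. V $$ (i,k))))"
    unfolding L by (rule sum.cong, simp, simp)
  also have "\<dots> = (\<Sum>k\<in>{p,p'}. det (R k) * det (W m p p' s a (\<lambda>i. V $$ (i,k))))"
  proof (rule sum.mono_neutral_right)
    show "finite {..<m}" by simp
    show "{p,p'} \<subseteq> {..<m}" using pm pm' by auto
    show "\<forall>k\<in>{..<m} - {p, p'}. det (R k) * det (W m p p' s a (\<lambda>i. V $$ (i,k))) = 0"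
    proof
      fix k assume k: "k \<in> {..<m} - {p,p'}"
      have "det (W m p p' s a (\<lambda>i. V $$ (i,k))) = 0"
      proof (rule det_identical_columns[OF W_carrier])
        show "k \<noteq> p'" "k < m" "p' < m" using k pm' by auto
        show "col (W m p p' s a (\<lambda>i. V $$ (i, k))) k = col (W m p p' s a (\<lambda>i. V $$ (i, k))) p'"
          using k pm' pp unfolding V_def by (intro eq_vecI) (auto simp: W_def)
      qed
      thus "det (R k) * det (W m p p' s a (\<lambda>i. V $$ (i,k))) = 0" by simp
    qed
  qed
  also have "\<dots> = det (R p) * det (W m p p' s a c) + det (R p') * det (W m p p' s a d)"
  proof -
    have "W m p p' s a (\<lambda>i. V $$ (i,p)) = W m p p' s a c"
      unfolding V_def W_def using pm by (intro eq_matI) auto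
    moreover have "W m p p' s a (\<lambda>i. V $$ (i,p')) = W m p p' s a d"
      unfolding V_def W_def using pp by (intro eq_matI) auto
    ultimately show ?thesis using pp by simp
  qed
  also have "R p = W m p p' s b d"
    unfolding R_def V_def replace_col_def W_def by (rule eq_matI) auto
  also have "R p' = W m p p' s c b"
    unfolding R_def V_def replace_col_def W_def using pp by (intro eq_matI) auto
  finally show ?thesis unfolding V_def .
qed

lemma det_unit_col0:
  fixes A :: "complex mat"
  assumes A: "A \<in> carrier_mat (Suc n) (Suc n)" and r: "r < Suc n"
    and col: "\<And>i. i < Suc n \<Longrightarrow> A $$ (i,0) = (if i = r then 1 else 0)"
  shows "det A = (-1)^r * det (mat_delete A r 0)"
proof -
  have "det A = (\<Sum>i<Suc n. A $$ (i,0) * cofactor A i 0)"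
    by (rule laplace_expansion_column[OF A], simp)
  also have "\<dots> = (\<Sum>i<Suc n. (if i = r then cofactor A i 0 else 0))"
    by (rule sum.cong, simp, simp add: col)
  also have "\<dots> = cofactor A r 0" using r by simp
  finally show ?thesis unfolding cofactor_def by simp
qed

lemma det_unit_col_last:
  fixes A :: "complex mat"
  assumes A: "A \<in> carrier_mat (Suc n) (Suc n)" and r: "r < Suc n"
    and col: "\<And>i. i < Suc n \<Longrightarrow> A $$ (i,n) = (if i = r then 1 else 0)"
  shows "det A = (-1)^(r+n) * det (mat_delete A r n)"
proof -
  have "det A = (\<Sum>i<Suc n. A $$ (i,n) * cofactor A i n)"
    by (rule laplace_expansion_column[OF A], simp)
  also have "\<dots> = (\<Sum>i<Suc n. (if i = r then cofactor A i n else 0))"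
    by (rule sum.cong, simp, simp add: col)
  also have "\<dots> = cofactor A r n" using r by simp
  finally show ?thesis unfolding cofactor_def by simp
qed

lemma det_unit_row_last:
  fixes A :: "complex mat"
  assumes A: "A \<in> carrier_mat (Suc n) (Suc n)"
    and row: "\<And>j. j < Suc n \<Longrightarrow> A $$ (n,j) = (if j = n then 1 else 0)"
  shows "det A = det (mat_delete A n n)"
proof -
  have "det A = (\<Sum>j<Suc n. A $$ (n,j) * cofactor A n j)"
    by (rule laplace_expansion_row[OF A], simp)
  also have "\<dots> = (\<Sum>j<Suc n. (if j = n then cofactor A n j else 0))"
    by (rule sum.cong, simp, simp add: row)
  also have "\<dots> = cofactor A n n" by simp
  finally show ?thesis unfolding cofactor_def by simp
qed

lemma det_border:
  fixes A :: "complex mat"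
  assumes A: "A \<in> carrier_mat (Suc n) (Suc n)"
    and row: "\<And>j. j < Suc n \<Longrightarrow> A $$ (0,j) = c * u ^ j"
  shows "det A = c * det (mat n n (\<lambda>(i,j). A $$ (Suc i, Suc j) - u * A $$ (Suc i, j)))"
proof -
  define U :: "complex mat" where "U = mat (Suc n) (Suc n) (\<lambda>(i,j). if i = j then 1 else if Suc i = j then -u else 0)"
  have U: "U \<in> carrier_mat (Suc n) (Suc n)" unfolding U_def by simp
  have "det U = prod_list (diag_mat U)"
    by (rule det_upper_triangular[OF _ U], auto simp: U_def)
  also have "\<dots> = 1"
  proof -
    have "diag_mat U = map (\<lambda>i. 1) [0..<Suc n]" unfolding diag_mat_def by (auto simp: U_def)
    thus ?thesis by (simp add: map_replicate_const)
  qed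
  finally have dU: "det U = 1" .
  have AU: "A * U \<in> carrier_mat (Suc n) (Suc n)" using A U by simp
  have ent: "(A * U) $$ (i,j) = A $$ (i,j) + (if j > 0 then - u * A $$ (i, j - 1) else 0)"
    if i: "i < Suc n" and j: "j < Suc n" for i j
  proof -
    have "(A * U) $$ (i,j) = (\<Sum>k<Suc n. A $$ (i,k) * U $$ (k,j))"
      using A U i j unfolding times_mat_def scalar_prod_def by (auto intro: sum.cong)
    also have "\<dots> = (\<Sum>k<Suc n. (if k = j then A $$ (i,k) else 0) + (if k = j - 1 \<and> j > 0 then - u * A $$ (i,k) else 0))"
      by (rule sum.cong, simp, auto simp: U_def j)
    also have "\<dots> = A $$ (i,j) + (if j > 0 then - u * A $$ (i, j - 1) else 0)"
      using j by (simp add: sum.distrib sum.delta' cong: if_cong, auto)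
    finally show ?thesis .
  qed
  have "det A = det (A * U)" using det_mult[OF A U] dU by simp
  also have "\<dots> = (\<Sum>j<Suc n. (A * U) $$ (0,j) * cofactor (A * U) 0 j)"
    by (rule laplace_expansion_row[OF AU], simp)
  also have "\<dots> = (\<Sum>j<Suc n. (if j = 0 then c * cofactor (A * U) 0 j else 0))"
  proof (rule sum.cong[OF refl])
    fix j assume j: "j \<in> {..<Suc n}"
    show "(A * U) $$ (0,j) * cofactor (A * U) 0 j = (if j = 0 then c * cofactor (A * U) 0 j else 0)"
    proof (cases j)
      case 0 thus ?thesis using j by (simp add: ent row)
    next
      case (Suc j') thus ?thesis using j by (simp add: ent row)
    qed
  qed
  also have "\<dots> = c * cofactor (A * U) 0 0" by simp
  finally have dA: "det A = c * cofactor (A * U) 0 0" .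
  have "mat_delete (A * U) 0 0 = mat n n (\<lambda>(i,j). A $$ (Suc i, Suc j) - u * A $$ (Suc i, j))"
  proof -
    have d: "dim_row (A * U) = Suc n" "dim_col (A * U) = Suc n" using AU by auto
    show ?thesis by (intro eq_matI) (auto simp: mat_delete_def ent d simp del: index_mult_mat)
  qed
  with dA show ?thesis unfolding cofactor_def by simp
qed

definition Dn :: "nat \<Rightarrow> (int \<Rightarrow> complex) \<Rightarrow> complex" where
  "Dn N g = det (mat N N (\<lambda>(i,j). g (int N - 2 * int i + int j)))"

definition sh :: "complex \<Rightarrow> (int \<Rightarrow> complex) \<Rightarrow> int \<Rightarrow> complex" where
  "sh u g n = g n - u * g (n - 1)"

definition uv :: "nat \<Rightarrow> nat \<Rightarrow> complex" where
  "uv r i = (if i = r then 1 else 0)"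

definition col5 :: "nat \<Rightarrow> complex \<Rightarrow> complex \<Rightarrow> (int \<Rightarrow> complex) \<Rightarrow> nat \<Rightarrow> nat \<Rightarrow> complex" where
  "col5 N u v g k i = (if i = 0 then u ^ k else if i = 1 then v ^ k else g (int N + 3 - 2 * int i + int k))"

lemma M1:
  "det (W (N+3) 0 (N+2) (col5 N u v g) (col5 N u v g 0) (col5 N u v g (N+2))) = (v - u) * Dn (N+1) (sh v (sh u g))"
proof -
  let ?A = "W (N+3) 0 (N+2) (col5 N u v g) (col5 N u v g 0) (col5 N u v g (N+2))"
  have "det ?A = 1 * det (mat (Suc (N+1)) (Suc (N+1)) (\<lambda>(i,j). ?A $$ (Suc i, Suc j) - u * ?A $$ (Suc i, j)))"
    by (rule det_border) (auto simp: col5_def W_def)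
  also have "mat (Suc (N+1)) (Suc (N+1)) (\<lambda>(i,j). ?A $$ (Suc i, Suc j) - u * ?A $$ (Suc i, j))
     = mat (Suc (N+1)) (Suc (N+1)) (\<lambda>(i,j). if i = 0 then (v - u) * v ^ j else sh u g (int N + 2 - 2 * int i + int j))"
    by (rule eq_matI) (auto simp: col5_def sh_def algebra_simps)
  also have "det \<dots> = (v - u) * det (mat (N+1) (N+1) (\<lambda>(i,j). sh v (sh u g) (int (N+1) - 2 * int i + int j)))"
  proof -
    let ?B = "mat (Suc (N+1)) (Suc (N+1)) (\<lambda>(i,j). if i = 0 then (v - u) * v ^ j else sh u g (int N + 2 - 2 * int i + int j))"
    have "det ?B = (v - u) * det (mat (N+1) (N+1) (\<lambda>(i,j). ?B $$ (Suc i, Suc j) - v * ?B $$ (Suc i, j)))"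
      by (rule det_border) auto
    also have "mat (N+1) (N+1) (\<lambda>(i,j). ?B $$ (Suc i, Suc j) - v * ?B $$ (Suc i, j)) = mat (N+1) (N+1) (\<lambda>(i,j). sh v (sh u g) (int (N+1) - 2 * int i + int j))"
      by (rule eq_matI) (auto simp: sh_def algebra_simps)
    finally show ?thesis .
  qed
  finally show ?thesis unfolding Dn_def by simp
qed

lemma trick:
  assumes g0: "g 0 = 1" and gn: "\<forall>n<0. g n = 0"
  shows "det (mat (Suc N) (Suc N) (\<lambda>(i,j). g (int N - 2 * int i + int j))) = Dn N g"
proof -
  let ?A = "mat (Suc N) (Suc N) (\<lambda>(i,j). g (int N - 2 * int i + int j))"
  have "det ?A = det (mat_delete ?A N N)"
    by (rule det_unit_row_last) (auto simp: g0 gn)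
  also have "mat_delete ?A N N = mat N N (\<lambda>(i,j). g (int N - 2 * int i + int j))"
    unfolding mat_delete_def by (rule eq_matI) auto
  finally show ?thesis unfolding Dn_def .
qed

lemma sh0: "g 0 = 1 \<Longrightarrow> \<forall>n<0. g n = 0 \<Longrightarrow> sh u g 0 = 1"
  unfolding sh_def by simp
lemma shn: "\<forall>n<0. g n = 0 \<Longrightarrow> \<forall>n<0. sh u g n = 0"
  unfolding sh_def by simp

lemma M2:
  assumes g0: "g 0 = 1" and gn: "\<forall>n<0. g n = 0"
  shows "det (W (N+3) 0 (N+2) (col5 N u v g) (uv 0) (uv 1)) = (-1)^(N+1) * Dn N g"
proof -
  let ?A = "W (N+3) 0 (N+2) (col5 N u v g) (uv 0) (uv 1)"
  have "det ?A = (-1)^0 * det (mat_delete ?A 0 0)"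
    by (rule det_unit_col0) (auto simp: W_def uv_def)
  also have "mat_delete ?A 0 0 = mat (Suc (N+1)) (Suc (N+1)) (\<lambda>(i,j). if j = N+1 then uv 0 i else col5 N u v g (Suc j) (Suc i))"
    unfolding mat_delete_def by (rule eq_matI) (auto simp: W_def uv_def)
  also have "det \<dots> = (-1)^(0 + (N+1)) * det (mat_delete (mat (Suc (N+1)) (Suc (N+1)) (\<lambda>(i,j). if j = N+1 then uv 0 i else col5 N u v g (Suc j) (Suc i))) 0 (N+1))"
    by (rule det_unit_col_last) (auto simp: uv_def)
  also have "mat_delete (mat (Suc (N+1)) (Suc (N+1)) (\<lambda>(i,j). if j = N+1 then uv 0 i else col5 N u v g (Suc j) (Suc i))) 0 (N+1)
     = mat (Suc N) (Suc N) (\<lambda>(i,j). g (int N - 2 * int i + int j))"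
    unfolding mat_delete_def by (rule eq_matI) (auto simp: col5_def algebra_simps)
  also have "det \<dots> = Dn N g" by (rule trick[where g=g, OF g0 gn])
  finally show ?thesis by simp
qed

lemma M3:
  "det (W (N+3) 0 (N+2) (col5 N u v g) (uv 1) (col5 N u v g (N+2))) = - u * Dn (N+1) (sh u g)"
proof -
  let ?A = "W (N+3) 0 (N+2) (col5 N u v g) (uv 1) (col5 N u v g (N+2))"
  have "det ?A = (-1)^1 * det (mat_delete ?A 1 0)"
    by (rule det_unit_col0) (auto simp: W_def uv_def)
  also have "mat_delete ?A 1 0 = mat (Suc (N+1)) (Suc (N+1)) (\<lambda>(i,j). if i = 0 then u * u ^ j else col5 N u v g (Suc j) (Suc i))"
    unfolding mat_delete_def by (rule eq_matI) (auto simp: W_def col5_def)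
  also have "det \<dots> = u * det (mat (N+1) (N+1) (\<lambda>(i,j). sh u g (int (N+1) - 2 * int i + int j)))"
  proof -
    let ?B = "mat (Suc (N+1)) (Suc (N+1)) (\<lambda>(i,j). if i = 0 then u * u ^ j else col5 N u v g (Suc j) (Suc i))"
    have "det ?B = u * det (mat (N+1) (N+1) (\<lambda>(i,j). ?B $$ (Suc i, Suc j) - u * ?B $$ (Suc i, j)))"
      by (rule det_border) auto
    also have "mat (N+1) (N+1) (\<lambda>(i,j). ?B $$ (Suc i, Suc j) - u * ?B $$ (Suc i, j)) = mat (N+1) (N+1) (\<lambda>(i,j). sh u g (int (N+1) - 2 * int i + int j))"
      by (rule eq_matI) (auto simp: col5_def sh_def algebra_simps)
    finally show ?thesis .
  qed
  finally show ?thesis unfolding Dn_def by simp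
qed

lemma M4:
  assumes g0: "g 0 = 1" and gn: "\<forall>n<0. g n = 0"
  shows "det (W (N+3) 0 (N+2) (col5 N u v g) (col5 N u v g 0) (uv 0)) = (-1)^N * Dn N (sh v g)"
proof -
  let ?A = "W (N+3) 0 (N+2) (col5 N u v g) (col5 N u v g 0) (uv 0)"
  have "det ?A = (-1)^(0 + (N+2)) * det (mat_delete ?A 0 (N+2))"
    by (rule det_unit_col_last) (auto simp: W_def uv_def)
  also have "mat_delete ?A 0 (N+2) = mat (Suc (N+1)) (Suc (N+1)) (\<lambda>(i,j). if i = 0 then 1 * v ^ j else col5 N u v g j (Suc i))"
    unfolding mat_delete_def by (rule eq_matI) (auto simp: W_def col5_def)
  also have "det \<dots> = 1 * det (mat (Suc N) (Suc N) (\<lambda>(i,j). sh v g (int N - 2 * int i + int j)))"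
  proof -
    let ?B = "mat (Suc (N+1)) (Suc (N+1)) (\<lambda>(i,j). if i = 0 then 1 * v ^ j else col5 N u v g j (Suc i))"
    have "det ?B = 1 * det (mat (N+1) (N+1) (\<lambda>(i,j). ?B $$ (Suc i, Suc j) - v * ?B $$ (Suc i, j)))"
      by (rule det_border) auto
    also have "mat (N+1) (N+1) (\<lambda>(i,j). ?B $$ (Suc i, Suc j) - v * ?B $$ (Suc i, j)) = mat (Suc N) (Suc N) (\<lambda>(i,j). sh v g (int N - 2 * int i + int j))"
      by (rule eq_matI) (auto simp: col5_def sh_def algebra_simps)
    finally show ?thesis .
  qed
  also have "det (mat (Suc N) (Suc N) (\<lambda>(i,j). sh v g (int N - 2 * int i + int j))) = Dn N (sh v g)"
    by (rule trick[where g="sh _ g", OF sh0[where g=g, OF g0 gn] shn[OF gn]])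
  finally show ?thesis by simp
qed

lemma M5:
  "det (W (N+3) 0 (N+2) (col5 N u v g) (uv 0) (col5 N u v g (N+2))) = v * Dn (N+1) (sh v g)"
proof -
  let ?A = "W (N+3) 0 (N+2) (col5 N u v g) (uv 0) (col5 N u v g (N+2))"
  have "det ?A = (-1)^0 * det (mat_delete ?A 0 0)"
    by (rule det_unit_col0) (auto simp: W_def uv_def)
  also have "mat_delete ?A 0 0 = mat (Suc (N+1)) (Suc (N+1)) (\<lambda>(i,j). if i = 0 then v * v ^ j else col5 N u v g (Suc j) (Suc i))"
    unfolding mat_delete_def by (rule eq_matI) (auto simp: W_def col5_def)
  also have "det \<dots> = v * det (mat (N+1) (N+1) (\<lambda>(i,j). sh v g (int (N+1) - 2 * int i + int j)))"
  proof -
    let ?B = "mat (Suc (N+1)) (Suc (N+1)) (\<lambda>(i,j). if i = 0 then v * v ^ j else col5 N u v g (Suc j) (Suc i))"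
    have "det ?B = v * det (mat (N+1) (N+1) (\<lambda>(i,j). ?B $$ (Suc i, Suc j) - v * ?B $$ (Suc i, j)))"
      by (rule det_border) auto
    also have "mat (N+1) (N+1) (\<lambda>(i,j). ?B $$ (Suc i, Suc j) - v * ?B $$ (Suc i, j)) = mat (N+1) (N+1) (\<lambda>(i,j). sh v g (int (N+1) - 2 * int i + int j))"
      by (rule eq_matI) (auto simp: col5_def sh_def algebra_simps)
    finally show ?thesis .
  qed
  finally show ?thesis unfolding Dn_def by simp
qed

lemma M6:
  assumes g0: "g 0 = 1" and gn: "\<forall>n<0. g n = 0"
  shows "det (W (N+3) 0 (N+2) (col5 N u v g) (col5 N u v g 0) (uv 1)) = (-1)^(N+1) * Dn N (sh u g)"
proof -
  let ?A = "W (N+3) 0 (N+2) (col5 N u v g) (col5 N u v g 0) (uv 1)"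
  have "det ?A = (-1)^(1 + (N+2)) * det (mat_delete ?A 1 (N+2))"
    by (rule det_unit_col_last) (auto simp: W_def uv_def)
  also have "mat_delete ?A 1 (N+2) = mat (Suc (N+1)) (Suc (N+1)) (\<lambda>(i,j). if i = 0 then 1 * u ^ j else col5 N u v g j (Suc i))"
    unfolding mat_delete_def by (rule eq_matI) (auto simp: W_def col5_def)
  also have "det \<dots> = 1 * det (mat (Suc N) (Suc N) (\<lambda>(i,j). sh u g (int N - 2 * int i + int j)))"
  proof -
    let ?B = "mat (Suc (N+1)) (Suc (N+1)) (\<lambda>(i,j). if i = 0 then 1 * u ^ j else col5 N u v g j (Suc i))"
    have "det ?B = 1 * det (mat (N+1) (N+1) (\<lambda>(i,j). ?B $$ (Suc i, Suc j) - u * ?B $$ (Suc i, j)))"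
      by (rule det_border) auto
    also have "mat (N+1) (N+1) (\<lambda>(i,j). ?B $$ (Suc i, Suc j) - u * ?B $$ (Suc i, j)) = mat (Suc N) (Suc N) (\<lambda>(i,j). sh u g (int N - 2 * int i + int j))"
      by (rule eq_matI) (auto simp: col5_def sh_def algebra_simps)
    finally show ?thesis .
  qed
  also have "det (mat (Suc N) (Suc N) (\<lambda>(i,j). sh u g (int N - 2 * int i + int j))) = Dn N (sh u g)"
    by (rule trick[where g="sh _ g", OF sh0[where g=g, OF g0 gn] shn[OF gn]])
  finally show ?thesis by simp
qed

lemma M7:
  assumes g0: "g 0 = 1" and gn: "\<forall>n<0. g n = 0"
  shows "det (W (N+3) 0 (N+2) (col5 N u v g) (uv 1) (uv 0)) = (-1)^N * Dn N g"
proof -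
  let ?A = "W (N+3) 0 (N+2) (col5 N u v g) (uv 1) (uv 0)"
  have "det ?A = (-1)^1 * det (mat_delete ?A 1 0)"
    by (rule det_unit_col0) (auto simp: W_def uv_def)
  also have "mat_delete ?A 1 0 = mat (Suc (N+1)) (Suc (N+1)) (\<lambda>(i,j). if j = N+1 then uv 0 i else col5 N u v g (Suc j) (if i = 0 then 0 else Suc i))"
    unfolding mat_delete_def by (rule eq_matI) (auto simp: W_def uv_def)
  also have "det \<dots> = (-1)^(0 + (N+1)) * det (mat_delete (mat (Suc (N+1)) (Suc (N+1)) (\<lambda>(i,j). if j = N+1 then uv 0 i else col5 N u v g (Suc j) (if i = 0 then 0 else Suc i))) 0 (N+1))"
    by (rule det_unit_col_last) (auto simp: uv_def)
  also have "mat_delete (mat (Suc (N+1)) (Suc (N+1)) (\<lambda>(i,j). if j = N+1 then uv 0 i else col5 N u v g (Suc j) (if i = 0 then 0 else Suc i))) 0 (N+1)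
     = mat (Suc N) (Suc N) (\<lambda>(i,j). g (int N - 2 * int i + int j))"
    unfolding mat_delete_def by (rule eq_matI) (auto simp: col5_def algebra_simps)
  also have "det \<dots> = Dn N g" by (rule trick[where g=g, OF g0 gn])
  finally show ?thesis by (simp add: power_add)
qed

lemma I5:
  assumes g0: "g 0 = 1" and gn: "\<forall>n<0. g n = 0"
  shows "(u - v) * Dn (N+1) (sh v (sh u g)) * Dn N g = u * Dn (N+1) (sh u g) * Dn N (sh v g) - v * Dn (N+1) (sh v g) * Dn N (sh u g)"
proof -
  have P: "det (W (N+3) 0 (N+2) (col5 N u v g) (uv 1) (col5 N u v g (N+2))) * det (W (N+3) 0 (N+2) (col5 N u v g) (col5 N u v g 0) (uv 0)) =
         det (W (N+3) 0 (N+2) (col5 N u v g) (uv 0) (col5 N u v g (N+2))) * det (W (N+3) 0 (N+2) (col5 N u v g) (col5 N u v g 0) (uv 1)) +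
         det (W (N+3) 0 (N+2) (col5 N u v g) (uv 1) (uv 0)) * det (W (N+3) 0 (N+2) (col5 N u v g) (col5 N u v g 0) (col5 N u v g (N+2)))"
    by (rule plucker) auto
  have s: "((-1::complex)^(N+1)) = - ((-1)^N)" by simp
  from P show ?thesis unfolding M1 M2[where g=g, OF g0 gn] M3 M4[where g=g, OF g0 gn] M5 M6[where g=g, OF g0 gn] M7[where g=g, OF g0 gn] s
    by (cases "even N") (auto simp: algebra_simps)
qed

definition col6 :: "nat \<Rightarrow> complex \<Rightarrow> complex \<Rightarrow> (int \<Rightarrow> complex) \<Rightarrow> nat \<Rightarrow> nat \<Rightarrow> complex" where
  "col6 N u v g k i = (if i = 0 then u ^ k else if i = 1 then v ^ k else g (int N + 4 - 2 * int i + int k))"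

abbreviation "s6 N u v g \<equiv> (\<lambda>j. col6 N u v g (j - 1))"

lemma Q1:
  "det (W (N+3) 0 1 (s6 N u v g) (uv 2) (col6 N u v g 0)) = (v - u) * Dn N (sh v (sh u g))"
proof -
  let ?A = "W (N+3) 0 1 (s6 N u v g) (uv 2) (col6 N u v g 0)"
  have "det ?A = (-1)^2 * det (mat_delete ?A 2 0)"
    by (rule det_unit_col0) (auto simp: W_def uv_def)
  also have "mat_delete ?A 2 0 = mat (Suc (Suc N)) (Suc (Suc N)) (\<lambda>(i,j). col6 N u v g j (if i < 2 then i else Suc i))"
    unfolding mat_delete_def by (rule eq_matI) (auto simp: W_def)
  also have "det \<dots> = 1 * det (mat (Suc N) (Suc N) (\<lambda>(i,j). if i = 0 then (v - u) * v ^ j else sh u g (int N + 1 - 2 * int i + int j)))"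
  proof -
    let ?B = "mat (Suc (Suc N)) (Suc (Suc N)) (\<lambda>(i,j). col6 N u v g j (if i < 2 then i else Suc i))"
    have "det ?B = 1 * det (mat (Suc N) (Suc N) (\<lambda>(i,j). ?B $$ (Suc i, Suc j) - u * ?B $$ (Suc i, j)))"
      by (rule det_border) (auto simp: col6_def)
    also have "mat (Suc N) (Suc N) (\<lambda>(i,j). ?B $$ (Suc i, Suc j) - u * ?B $$ (Suc i, j)) = mat (Suc N) (Suc N) (\<lambda>(i,j). if i = 0 then (v - u) * v ^ j else sh u g (int N + 1 - 2 * int i + int j))"
      by (rule eq_matI) (auto simp: col6_def sh_def algebra_simps)
    finally show ?thesis .
  qed
  also have "det (mat (Suc N) (Suc N) (\<lambda>(i,j). if i = 0 then (v - u) * v ^ j else sh u g (int N + 1 - 2 * int i + int j))) = (v - u) * Dn N (sh v (sh u g))"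
  proof -
    let ?B = "mat (Suc N) (Suc N) (\<lambda>(i,j). if i = 0 then (v - u) * v ^ j else sh u g (int N + 1 - 2 * int i + int j))"
    have "det ?B = (v - u) * det (mat N N (\<lambda>(i,j). ?B $$ (Suc i, Suc j) - v * ?B $$ (Suc i, j)))"
      by (rule det_border) auto
    also have "mat N N (\<lambda>(i,j). ?B $$ (Suc i, Suc j) - v * ?B $$ (Suc i, j)) = mat N N (\<lambda>(i,j). sh v (sh u g) (int N - 2 * int i + int j))"
      by (rule eq_matI) (auto simp: sh_def algebra_simps)
    finally show ?thesis unfolding Dn_def .
  qed
  finally show ?thesis by simp
qed

lemma Q2:
  "det (W (N+3) 0 1 (s6 N u v g) (uv 0) (uv 1)) = Dn (N+1) g"
proof -
  let ?A = "W (N+3) 0 1 (s6 N u v g) (uv 0) (uv 1)"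
  have "det ?A = (-1)^0 * det (mat_delete ?A 0 0)"
    by (rule det_unit_col0) (auto simp: W_def uv_def)
  also have "mat_delete ?A 0 0 = mat (Suc (Suc N)) (Suc (Suc N)) (\<lambda>(i,j). if j = 0 then uv 0 i else col6 N u v g j (Suc i))"
    unfolding mat_delete_def by (rule eq_matI) (auto simp: W_def uv_def)
  also have "det \<dots> = (-1)^0 * det (mat_delete (mat (Suc (Suc N)) (Suc (Suc N)) (\<lambda>(i,j). if j = 0 then uv 0 i else col6 N u v g j (Suc i))) 0 0)"
    by (rule det_unit_col0) (auto simp: uv_def)
  also have "mat_delete (mat (Suc (Suc N)) (Suc (Suc N)) (\<lambda>(i,j). if j = 0 then uv 0 i else col6 N u v g j (Suc i))) 0 0
     = mat (N+1) (N+1) (\<lambda>(i,j). g (int (N+1) - 2 * int i + int j))"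
    unfolding mat_delete_def by (rule eq_matI) (auto simp: col6_def algebra_simps)
  finally show ?thesis unfolding Dn_def by simp
qed

lemma Q3:
  "det (W (N+3) 0 1 (s6 N u v g) (uv 1) (col6 N u v g 0)) = - Dn (N+1) (sh u g)"
proof -
  let ?A = "W (N+3) 0 1 (s6 N u v g) (uv 1) (col6 N u v g 0)"
  have "det ?A = (-1)^1 * det (mat_delete ?A 1 0)"
    by (rule det_unit_col0) (auto simp: W_def uv_def)
  also have "mat_delete ?A 1 0 = mat (Suc (Suc N)) (Suc (Suc N)) (\<lambda>(i,j). col6 N u v g j (if i = 0 then 0 else Suc i))"
    unfolding mat_delete_def by (rule eq_matI) (auto simp: W_def)
  also have "det \<dots> = 1 * det (mat (N+1) (N+1) (\<lambda>(i,j). sh u g (int (N+1) - 2 * int i + int j)))"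
  proof -
    let ?B = "mat (Suc (Suc N)) (Suc (Suc N)) (\<lambda>(i,j). col6 N u v g j (if i = 0 then 0 else Suc i))"
    have "det ?B = 1 * det (mat (Suc N) (Suc N) (\<lambda>(i,j). ?B $$ (Suc i, Suc j) - u * ?B $$ (Suc i, j)))"
      by (rule det_border) (auto simp: col6_def)
    also have "mat (Suc N) (Suc N) (\<lambda>(i,j). ?B $$ (Suc i, Suc j) - u * ?B $$ (Suc i, j)) = mat (N+1) (N+1) (\<lambda>(i,j). sh u g (int (N+1) - 2 * int i + int j))"
      by (rule eq_matI) (auto simp: col6_def sh_def algebra_simps)
    finally show ?thesis .
  qed
  finally show ?thesis unfolding Dn_def by simp
qed

lemma Q4:
  "det (W (N+3) 0 1 (s6 N u v g) (uv 0) (uv 2)) = - v * Dn N (sh v g)"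
proof -
  let ?A = "W (N+3) 0 1 (s6 N u v g) (uv 0) (uv 2)"
  let ?A1 = "mat (Suc (Suc N)) (Suc (Suc N)) (\<lambda>(i,j). if j = 0 then uv 1 i else col6 N u v g j (Suc i))"
  let ?A2 = "mat (Suc N) (Suc N) (\<lambda>(i,j). if i = 0 then v * v ^ j else col6 N u v g (Suc j) (Suc (Suc i)))"
  have "det ?A = (-1)^0 * det (mat_delete ?A 0 0)"
    by (rule det_unit_col0) (auto simp: W_def uv_def)
  also have "mat_delete ?A 0 0 = ?A1"
    unfolding mat_delete_def by (rule eq_matI) (auto simp: W_def uv_def)
  also have "det ?A1 = (-1)^1 * det (mat_delete ?A1 1 0)"
    by (rule det_unit_col0) (auto simp: uv_def)
  also have "mat_delete ?A1 1 0 = ?A2"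
    unfolding mat_delete_def by (rule eq_matI) (auto simp: col6_def)
  also have "det ?A2 = v * det (mat N N (\<lambda>(i,j). sh v g (int N - 2 * int i + int j)))"
  proof -
    have "det ?A2 = v * det (mat N N (\<lambda>(i,j). ?A2 $$ (Suc i, Suc j) - v * ?A2 $$ (Suc i, j)))"
      by (rule det_border) auto
    also have "mat N N (\<lambda>(i,j). ?A2 $$ (Suc i, Suc j) - v * ?A2 $$ (Suc i, j)) = mat N N (\<lambda>(i,j). sh v g (int N - 2 * int i + int j))"
      by (rule eq_matI) (auto simp: col6_def sh_def algebra_simps)
    finally show ?thesis .
  qed
  finally show ?thesis unfolding Dn_def by simp
qed

lemma Q5:
  "det (W (N+3) 0 1 (s6 N u v g) (uv 2) (uv 1)) = - u * Dn N (sh u g)"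
proof -
  let ?A = "W (N+3) 0 1 (s6 N u v g) (uv 2) (uv 1)"
  let ?A1 = "mat (Suc (Suc N)) (Suc (Suc N)) (\<lambda>(i,j). if j = 0 then uv 1 i else col6 N u v g j (if i < 2 then i else Suc i))"
  let ?A2 = "mat (Suc N) (Suc N) (\<lambda>(i,j). if i = 0 then u * u ^ j else col6 N u v g (Suc j) (Suc (Suc i)))"
  have "det ?A = (-1)^2 * det (mat_delete ?A 2 0)"
    by (rule det_unit_col0) (auto simp: W_def uv_def)
  also have "mat_delete ?A 2 0 = ?A1"
    unfolding mat_delete_def by (rule eq_matI) (auto simp: W_def uv_def)
  also have "det ?A1 = (-1)^1 * det (mat_delete ?A1 1 0)"
    by (rule det_unit_col0) (auto simp: uv_def)
  also have "mat_delete ?A1 1 0 = ?A2"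
    unfolding mat_delete_def by (rule eq_matI) (auto simp: col6_def)
  also have "det ?A2 = u * det (mat N N (\<lambda>(i,j). sh u g (int N - 2 * int i + int j)))"
  proof -
    have "det ?A2 = u * det (mat N N (\<lambda>(i,j). ?A2 $$ (Suc i, Suc j) - u * ?A2 $$ (Suc i, j)))"
      by (rule det_border) auto
    also have "mat N N (\<lambda>(i,j). ?A2 $$ (Suc i, Suc j) - u * ?A2 $$ (Suc i, j)) = mat N N (\<lambda>(i,j). sh u g (int N - 2 * int i + int j))"
      by (rule eq_matI) (auto simp: col6_def sh_def algebra_simps)
    finally show ?thesis .
  qed
  finally show ?thesis unfolding Dn_def by simp
qed

lemma Q6:
  "det (W (N+3) 0 1 (s6 N u v g) (uv 0) (col6 N u v g 0)) = Dn (N+1) (sh v g)"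
proof -
  let ?A = "W (N+3) 0 1 (s6 N u v g) (uv 0) (col6 N u v g 0)"
  let ?A1 = "mat (Suc (Suc N)) (Suc (Suc N)) (\<lambda>(i,j). col6 N u v g j (Suc i))"
  have "det ?A = (-1)^0 * det (mat_delete ?A 0 0)"
    by (rule det_unit_col0) (auto simp: W_def uv_def)
  also have "mat_delete ?A 0 0 = ?A1"
    unfolding mat_delete_def by (rule eq_matI) (auto simp: W_def)
  also have "det ?A1 = 1 * det (mat (Suc N) (Suc N) (\<lambda>(i,j). ?A1 $$ (Suc i, Suc j) - v * ?A1 $$ (Suc i, j)))"
    by (rule det_border) (auto simp: col6_def)
  also have "mat (Suc N) (Suc N) (\<lambda>(i,j). ?A1 $$ (Suc i, Suc j) - v * ?A1 $$ (Suc i, j)) = mat (N+1) (N+1) (\<lambda>(i,j). sh v g (int (N+1) - 2 * int i + int j))"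
    by (rule eq_matI) (auto simp: col6_def sh_def algebra_simps)
  finally show ?thesis unfolding Dn_def by simp
qed

lemma I6:
  "(u - v) * Dn (N+1) g * Dn N (sh v (sh u g)) = u * Dn (N+1) (sh v g) * Dn N (sh u g) - v * Dn (N+1) (sh u g) * Dn N (sh v g)"
proof -
  have P: "det (W (N+3) 0 1 (s6 N u v g) (uv 2) (col6 N u v g 0)) * det (W (N+3) 0 1 (s6 N u v g) (uv 0) (uv 1)) =
         det (W (N+3) 0 1 (s6 N u v g) (uv 1) (col6 N u v g 0)) * det (W (N+3) 0 1 (s6 N u v g) (uv 0) (uv 2)) +
         det (W (N+3) 0 1 (s6 N u v g) (uv 2) (uv 1)) * det (W (N+3) 0 1 (s6 N u v g) (uv 0) (col6 N u v g 0))"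
    by (rule plucker) auto
  from P show ?thesis unfolding Q1 Q2 Q3 Q4 Q5 Q6 by (auto simp: algebra_simps)
qed

definition Aser :: "complex \<Rightarrow> complex \<Rightarrow> complex fps" where
  "Aser q y = Abs_fps (\<lambda>a. y ^ a / qpoch q a)"
definition Eser :: "complex \<Rightarrow> complex fps" where
  "Eser q = Abs_fps (\<lambda>c. q ^ (c * (c - 1) div 2) / qpoch q c)"
definition qs :: "complex \<Rightarrow> complex fps \<Rightarrow> complex fps" where
  "qs q F = Abs_fps (\<lambda>n. q ^ n * fps_nth F n)"

lemma qpoch_0[simp]: "qpoch q 0 = 1" unfolding qpoch_def by simp
lemma qpoch_Suc: "qpoch q (Suc k) = qpoch q k * (1 - q ^ Suc k)"
  unfolding qpoch_def by (simp add: prod.cl_ivl_Suc)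

lemma qpoch_nz:
  assumes qn: "\<forall>n::nat. n > 0 \<longrightarrow> q ^ n \<noteq> 1"
  shows "qpoch q k \<noteq> 0"
proof (induction k)
  case 0 show ?case by simp
next
  case (Suc k)
  have "q ^ Suc k \<noteq> 1" using qn by blast
  thus ?case using Suc by (simp add: qpoch_Suc)
qed

lemma qs_mult: "qs q (F * G) = qs q F * qs q G"
proof (rule fps_ext)
  fix n
  have "fps_nth (qs q (F * G)) n = (\<Sum>i = 0..n. q ^ n * (fps_nth F i * fps_nth G (n - i)))"
    unfolding qs_def by (simp add: fps_mult_nth sum_distrib_left)
  also have "\<dots> = (\<Sum>i = 0..n. (q ^ i * fps_nth F i) * (q ^ (n - i) * fps_nth G (n - i)))"
  proof (rule sum.cong[OF refl])
    fix i assume "i \<in> {0..n}"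
    hence "q ^ n = q ^ i * q ^ (n - i)" by (simp add: power_add[symmetric])
    thus "q ^ n * (fps_nth F i * fps_nth G (n - i)) = (q ^ i * fps_nth F i) * (q ^ (n - i) * fps_nth G (n - i))"
      by (simp add: mult_ac)
  qed
  also have "\<dots> = fps_nth (qs q F * qs q G) n"
    unfolding qs_def by (simp add: fps_mult_nth)
  finally show "fps_nth (qs q (F * G)) n = fps_nth (qs q F * qs q G) n" .
qed

lemma Aser_scale: "Aser q (q * y) = qs q (Aser q y)"
  unfolding Aser_def qs_def by (rule fps_ext) (simp add: power_mult_distrib)

lemma Aser_shift:
  assumes qn: "\<forall>n::nat. n > 0 \<longrightarrow> q ^ n \<noteq> 1"
  shows "Aser q (q * y) = Aser q y * (1 - fps_const y * fps_X)"
proof (rule fps_ext)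
  fix n
  show "fps_nth (Aser q (q * y)) n = fps_nth (Aser q y * (1 - fps_const y * fps_X)) n"
  proof (cases n)
    case 0 thus ?thesis unfolding Aser_def by (simp add: algebra_simps)
  next
    case (Suc k)
    have nz: "qpoch q k \<noteq> 0" "1 - q ^ Suc k \<noteq> 0" using qpoch_nz[OF qn] qn by auto
    have "fps_nth (Aser q y * (1 - fps_const y * fps_X)) n = y ^ Suc k / qpoch q (Suc k) - y * (y ^ k / qpoch q k)"
      unfolding Aser_def using Suc by (simp add: algebra_simps fps_X_mult_right_nth)
    also have "\<dots> = (q * y) ^ Suc k / qpoch q (Suc k)"
      using nz unfolding qpoch_Suc by (simp add: field_simps power_mult_distrib)
    finally show ?thesis unfolding Aser_def using Suc by simp
  qed
qed

lemma exp_Suc: "Suc k * (Suc k - 1) div 2 = k * (k - 1) div 2 + k"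
proof -
  have "Suc k * (Suc k - 1) = k * (k - 1) + 2 * k" by (cases k) (auto simp: algebra_simps)
  thus ?thesis by simp
qed

lemma Eser_scale:
  assumes qn: "\<forall>n::nat. n > 0 \<longrightarrow> q ^ n \<noteq> 1"
  shows "Eser q = qs q (Eser q) * (1 + fps_X)"
proof (rule fps_ext)
  fix n
  show "fps_nth (Eser q) n = fps_nth (qs q (Eser q) * (1 + fps_X)) n"
  proof (cases n)
    case 0 thus ?thesis unfolding Eser_def qs_def by (simp add: algebra_simps)
  next
    case (Suc k)
    have nz: "qpoch q k \<noteq> 0" "1 - q ^ Suc k \<noteq> 0" using qpoch_nz[OF qn] qn by auto
    have "fps_nth (qs q (Eser q) * (1 + fps_X)) n =
        q ^ Suc k * (q ^ (Suc k * (Suc k - 1) div 2) / qpoch q (Suc k)) + q ^ k * (q ^ (k * (k - 1) div 2) / qpoch q k)"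
      unfolding Eser_def qs_def using Suc by (simp add: algebra_simps fps_X_mult_right_nth)
    also have "\<dots> = q ^ (Suc k * (Suc k - 1) div 2) / qpoch q (Suc k)"
      using nz unfolding qpoch_Suc exp_Suc by (simp add: field_simps power_add)
    finally show ?thesis unfolding Eser_def using Suc by simp
  qed
qed

lemma pp_fps: "pp q (int m) y z = (1 - q) ^ m * fps_nth (Aser q y * (Aser q z * Eser q)) m"
proof -
  have "fps_nth (Aser q y * (Aser q z * Eser q)) m =
     (\<Sum>a\<le>m. \<Sum>b\<le>m - a. y ^ a / qpoch q a * (z ^ b / qpoch q b * (q ^ ((m - a - b) * (m - a - b - 1) div 2) / qpoch q (m - a - b))))"
    unfolding Aser_def Eser_def by (simp add: fps_mult_nth atLeast0AtMost sum_distrib_left diff_diff_eq)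
  also have "\<dots> = (\<Sum>a\<le>m. \<Sum>b\<le>m - a. let c = m - a - b in y ^ a * z ^ b * q ^ (c * (c - 1) div 2) / (qpoch q a * qpoch q b * qpoch q c))"
    by (simp add: Let_def mult.assoc)
  finally show ?thesis unfolding pp_def by simp
qed

lemma pp_neg: "n < 0 \<Longrightarrow> pp q n y z = 0" unfolding pp_def by simp
lemma pp_0: "pp q 0 y z = 1" using pp_fps[of q 0 y z] unfolding Aser_def Eser_def by simp

lemma nth_shift: "m > 0 \<Longrightarrow> fps_nth ((F::complex fps) * (1 - fps_const c * fps_X)) m = fps_nth F m - c * fps_nth F (m - 1)"
proof -
  assume m: "m > 0"
  have "F * (1 - fps_const c * fps_X) = F - fps_const c * (F * fps_X)" by (simp add: right_diff_distrib mult_ac)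
  thus ?thesis using m by (simp add: fps_X_mult_right_nth)
qed
lemma nth_shift2: "m > 0 \<Longrightarrow> fps_nth ((F::complex fps) * (1 + fps_X)) m = fps_nth F m + fps_nth F (m - 1)"
proof -
  assume m: "m > 0"
  have "F * (1 + fps_X) = F + F * fps_X" by (simp add: distrib_left)
  thus ?thesis using m by (simp add: fps_X_mult_right_nth)
qed

lemma pp_gen:
  assumes H: "\<And>m. m > 0 \<Longrightarrow> f m = (1 - q) ^ m * (fps_nth T m - c * fps_nth T (m - 1))"
    and T: "\<And>m. pp q (int m) y z = (1 - q) ^ m * fps_nth T m"
    and f0: "f 0 = pp q 0 y z"
  shows "f m = pp q (int m) y z - (1 - q) * c * pp q (int m - 1) y z"
proof (cases m)
  case 0 thus ?thesis using f0 by (simp add: pp_neg)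
next
  case (Suc k)
  have mk: "int m - 1 = int k" using Suc by simp
  have e1: "pp q (int m) y z = (1 - q) ^ m * fps_nth T m" by (rule T)
  have e2: "pp q (int m - 1) y z = (1 - q) ^ k * fps_nth T k" unfolding mk by (rule T)
  have "f m = (1 - q) ^ m * (fps_nth T m - c * fps_nth T (m - 1))" using H Suc by simp
  thus ?thesis unfolding e1 e2 using Suc by (simp add: algebra_simps)
qed

lemma pp_y:
  assumes qn: "\<forall>n::nat. n > 0 \<longrightarrow> q ^ n \<noteq> 1"
  shows "pp q n (q * y) z = pp q n y z - (1 - q) * y * pp q (n - 1) y z"
proof (cases "n < 0")
  case True thus ?thesis by (simp add: pp_neg)
next
  case False
  then obtain m where n: "n = int m" by (metis nonneg_int_cases not_less)
  have "pp q (int m) (q * y) z = pp q (int m) y z - (1 - q) * y * pp q (int m - 1) y z"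
  proof (rule pp_gen[where T = "Aser q y * (Aser q z * Eser q)"])
    fix m :: nat assume m: "m > 0"
    have E: "Aser q (q * y) * (Aser q z * Eser q) = (Aser q y * (Aser q z * Eser q)) * (1 - fps_const y * fps_X)"
      unfolding Aser_shift[OF qn] by (simp only: mult_ac)
    have X: "fps_nth (Aser q (q * y) * (Aser q z * Eser q)) m = fps_nth (Aser q y * (Aser q z * Eser q)) m - y * fps_nth (Aser q y * (Aser q z * Eser q)) (m - 1)"
      unfolding E by (rule nth_shift[OF m])
    show "pp q (int m) (q * y) z = (1 - q) ^ m * (fps_nth (Aser q y * (Aser q z * Eser q)) m - y * fps_nth (Aser q y * (Aser q z * Eser q)) (m - 1))"
      by (simp only: pp_fps X)
  qed (auto simp: pp_fps pp_0 Aser_def Eser_def simp del: of_nat_0)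
  thus ?thesis using n by simp
qed

lemma pp_z:
  assumes qn: "\<forall>n::nat. n > 0 \<longrightarrow> q ^ n \<noteq> 1"
  shows "pp q n y (q * z) = pp q n y z - (1 - q) * z * pp q (n - 1) y z"
proof (cases "n < 0")
  case True thus ?thesis by (simp add: pp_neg)
next
  case False
  then obtain m where n: "n = int m" by (metis nonneg_int_cases not_less)
  have "pp q (int m) y (q * z) = pp q (int m) y z - (1 - q) * z * pp q (int m - 1) y z"
  proof (rule pp_gen[where T = "Aser q y * (Aser q z * Eser q)"])
    fix m :: nat assume m: "m > 0"
    have E: "Aser q y * (Aser q (q * z) * Eser q) = (Aser q y * (Aser q z * Eser q)) * (1 - fps_const z * fps_X)"
      unfolding Aser_shift[OF qn] by (simp only: mult_ac)
    have X: "fps_nth (Aser q y * (Aser q (q * z) * Eser q)) m = fps_nth (Aser q y * (Aser q z * Eser q)) m - z * fps_nth (Aser q y * (Aser q z * Eser q)) (m - 1)"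
      unfolding E by (rule nth_shift[OF m])
    show "pp q (int m) y (q * z) = (1 - q) ^ m * (fps_nth (Aser q y * (Aser q z * Eser q)) m - z * fps_nth (Aser q y * (Aser q z * Eser q)) (m - 1))"
      by (simp only: pp_fps X)
  qed (auto simp: pp_fps pp_0 Aser_def Eser_def simp del: of_nat_0)
  thus ?thesis using n by simp
qed

lemma pp_sc:
  assumes qn: "\<forall>n::nat. n > 0 \<longrightarrow> q ^ n \<noteq> 1" and q0: "q \<noteq> 0"
  shows "pp q n (q * y) (q * z) = q powi n * (pp q n y z + ((1 - q) / q) * pp q (n - 1) y z)"
proof (cases "n < 0")
  case True thus ?thesis by (simp add: pp_neg)
next
  case False
  then obtain m where n: "n = int m" by (metis nonneg_int_cases not_less)
  let ?T = "Aser q y * (Aser q z * Eser q)"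
  have E: "Aser q (q * y) * (Aser q (q * z) * Eser q) = qs q ?T * (1 + fps_X)"
  proof -
    have "Aser q (q * y) * (Aser q (q * z) * Eser q) = qs q (Aser q y) * (qs q (Aser q z) * (qs q (Eser q) * (1 + fps_X)))"
      unfolding Aser_scale by (subst Eser_scale[OF qn], rule refl)
    also have "\<dots> = qs q ?T * (1 + fps_X)" unfolding qs_mult by (simp only: mult_ac)
    finally show ?thesis .
  qed
  show ?thesis
  proof (cases m)
    case 0 thus ?thesis using n by (simp add: pp_0 pp_neg)
  next
    case (Suc k)
    have mk: "int m - 1 = int k" using Suc by simp
    have X: "fps_nth (Aser q (q * y) * (Aser q (q * z) * Eser q)) m = q ^ m * fps_nth ?T m + q ^ k * fps_nth ?T k"
      unfolding E using nth_shift2[of m "qs q ?T"] Suc by (simp add: qs_def)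
    have "pp q n (q * y) (q * z) = (1 - q) ^ m * (q ^ m * fps_nth ?T m + q ^ k * fps_nth ?T k)"
      unfolding n pp_fps X ..
    also have "\<dots> = q powi n * (pp q n y z + ((1 - q) / q) * pp q (n - 1) y z)"
      unfolding n mk pp_fps power_int_of_nat using q0 Suc by (simp add: field_simps)
    finally show ?thesis .
  qed
qed

lemma Dn_leibniz: "Dn N f = (\<Sum>p | p permutes {0..<N}. of_int (sign p) * (\<Prod>i = 0..<N. f (int N - 2 * int i + int (p i))))"
proof -
  have "Dn N f = (\<Sum>p | p permutes {0..<N}. of_int (sign p) * (\<Prod>i = 0..<N. mat N N (\<lambda>(i,j). f (int N - 2 * int i + int j)) $$ (i, p i)))"
    unfolding Dn_def by (rule det_def') simp
  also have "\<dots> = (\<Sum>p | p permutes {0..<N}. of_int (sign p) * (\<Prod>i = 0..<N. f (int N - 2 * int i + int (p i))))"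
  proof (rule sum.cong[OF refl])
    fix p assume p: "p \<in> {p. p permutes {0..<N}}"
    have "(\<Prod>i = 0..<N. mat N N (\<lambda>(i,j). f (int N - 2 * int i + int j)) $$ (i, p i)) = (\<Prod>i = 0..<N. f (int N - 2 * int i + int (p i)))"
    proof (rule prod.cong[OF refl])
      fix i assume i: "i \<in> {0..<N}"
      have pp: "p permutes {0..<N}" using p by simp
      have "p i \<in> {0..<N}" using permutes_in_image[OF pp] i by simp
      thus "mat N N (\<lambda>(i,j). f (int N - 2 * int i + int j)) $$ (i, p i) = f (int N - 2 * int i + int (p i))"
        using i by simp
    qed
    thus "of_int (sign p) * (\<Prod>i = 0..<N. mat N N (\<lambda>(i,j). f (int N - 2 * int i + int j)) $$ (i, p i)) = of_int (sign p) * (\<Prod>i = 0..<N. f (int N - 2 * int i + int (p i)))"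
      by simp
  qed
  finally show ?thesis .
qed

lemma prod_powi:
  assumes c: "c \<noteq> 0" and A: "finite A"
  shows "(\<Prod>i\<in>A. (c::complex) powi f i) = c powi (\<Sum>i\<in>A. f i)"
  using A by (induction A rule: finite_induct) (auto simp: power_int_add c)

lemma sum_tri: "(\<Sum>i<N. int N - int i) = int (N * (N + 1) div 2)"
proof (induction N)
  case 0 thus ?case by simp
next
  case (Suc N)
  have "(\<Sum>i<Suc N. int (Suc N) - int i) = (\<Sum>i<N. (int N - int i) + 1) + 1" by (simp add: algebra_simps)
  also have "\<dots> = int (N * (N + 1) div 2) + int N + 1" by (simp add: sum.distrib Suc)
  also have "\<dots> = int (Suc N * (Suc N + 1) div 2)"
  proof -
    have "Suc N * (Suc N + 1) = N * (N + 1) + 2 * (N + 1)" by (simp add: algebra_simps)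
    hence "Suc N * (Suc N + 1) div 2 = N * (N + 1) div 2 + (N + 1)" by simp
    thus ?thesis by simp
  qed
  finally show ?case .
qed

lemma Dn_scale:
  assumes c: "c \<noteq> 0"
  shows "Dn N (\<lambda>n. c powi n * h n) = c ^ (N * (N + 1) div 2) * Dn N h"
proof -
  have "Dn N (\<lambda>n. c powi n * h n) = (\<Sum>p | p permutes {0..<N}. c ^ (N * (N + 1) div 2) * (of_int (sign p) * (\<Prod>i = 0..<N. h (int N - 2 * int i + int (p i)))))"
    unfolding Dn_leibniz
  proof (rule sum.cong[OF refl])
    fix p assume p: "p \<in> {p. p permutes {0..<N}}"
    hence pp: "p permutes {0..<N}" by simp
    have "(\<Prod>i = 0..<N. c powi (int N - 2 * int i + int (p i)) * h (int N - 2 * int i + int (p i)))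
       = (\<Prod>i = 0..<N. c powi (int N - 2 * int i + int (p i))) * (\<Prod>i = 0..<N. h (int N - 2 * int i + int (p i)))"
      by (rule prod.distrib)
    also have "(\<Prod>i = 0..<N. c powi (int N - 2 * int i + int (p i))) = c powi (\<Sum>i = 0..<N. int N - 2 * int i + int (p i))"
      by (rule prod_powi[OF c], simp)
    also have "(\<Sum>i = 0..<N. int N - 2 * int i + int (p i)) = (\<Sum>i = 0..<N. int N - 2 * int i) + (\<Sum>i = 0..<N. int (p i))"
      by (simp add: sum.distrib)
    also have "(\<Sum>i = 0..<N. int (p i)) = (\<Sum>i = 0..<N. int i)"
      using sum.permute[OF pp, of int] by (simp add: comp_def)
    also have "(\<Sum>i = 0..<N. int N - 2 * int i) + (\<Sum>i = 0..<N. int i) = (\<Sum>i<N. int N - int i)"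
      unfolding sum.distrib[symmetric] atLeast0LessThan by (rule sum.cong) auto
    also have "\<dots> = int (N * (N + 1) div 2)" by (rule sum_tri)
    finally show "of_int (sign p) * (\<Prod>i = 0..<N. c powi (int N - 2 * int i + int (p i)) * h (int N - 2 * int i + int (p i)))
       = c ^ (N * (N + 1) div 2) * (of_int (sign p) * (\<Prod>i = 0..<N. h (int N - 2 * int i + int (p i))))"
      by (simp only: power_int_of_nat mult_ac)
  qed
  also have "\<dots> = c ^ (N * (N + 1) div 2) * Dn N h"
    unfolding Dn_leibniz by (simp add: sum_distrib_left)
  finally show ?thesis .
qed

lemma Dn_cont:
  assumes "\<And>n. continuous_on UNIV (\<lambda>v. H v n)"
  shows "continuous_on UNIV (\<lambda>v. Dn N (H v))"
  unfolding Dn_leibniz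
  by (intro continuous_intros continuous_on_prod' assms)

lemma sh_comm: "sh u (sh v g) = sh v (sh u g)"
  unfolding sh_def by (rule ext) (simp add: algebra_simps)

lemma I3_ne:
  assumes g0: "g 0 = 1" and gn: "\<forall>n<0. g n = 0" and uv: "u \<noteq> v"
  shows "v * Dn (N+1) g * Dn N (sh v (sh u g)) + u * Dn (N+1) (sh v (sh u g)) * Dn N g = (u + v) * Dn (N+1) (sh u g) * Dn N (sh v g)"
proof -
  have a: "(u - v) * Dn (N+1) (sh v (sh u g)) * Dn N g = u * Dn (N+1) (sh u g) * Dn N (sh v g) - v * Dn (N+1) (sh v g) * Dn N (sh u g)"
    by (rule I5[OF g0 gn])
  have b: "(u - v) * Dn (N+1) g * Dn N (sh v (sh u g)) = u * Dn (N+1) (sh v g) * Dn N (sh u g) - v * Dn (N+1) (sh u g) * Dn N (sh v g)"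
    by (rule I6)
  have "(u - v) * (v * Dn (N+1) g * Dn N (sh v (sh u g)) + u * Dn (N+1) (sh v (sh u g)) * Dn N g) = (u - v) * ((u + v) * Dn (N+1) (sh u g) * Dn N (sh v g))"
  proof -
    have "(u - v) * (v * Dn (N+1) g * Dn N (sh v (sh u g)) + u * Dn (N+1) (sh v (sh u g)) * Dn N g)
       = v * ((u - v) * Dn (N+1) g * Dn N (sh v (sh u g))) + u * ((u - v) * Dn (N+1) (sh v (sh u g)) * Dn N g)"
      by (simp add: algebra_simps)
    also have "\<dots> = (u - v) * ((u + v) * Dn (N+1) (sh u g) * Dn N (sh v g))"
      unfolding a b by (simp add: algebra_simps)
    finally show ?thesis .
  qed
  thus ?thesis using uv by simp
qed

lemma zero_by_cont:
  fixes F :: "complex \<Rightarrow> complex"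
  assumes c: "continuous_on UNIV F" and z: "\<And>v. v \<noteq> u \<Longrightarrow> F v = 0"
  shows "F u = 0"
proof -
  have "(F \<longlongrightarrow> F u) (at u)" using c by (simp add: continuous_on_def)
  moreover have "(F \<longlongrightarrow> 0) (at u)"
    by (rule tendsto_eventually) (auto simp: eventually_at_filter z)
  ultimately show ?thesis by (rule tendsto_unique[OF at_neq_bot])
qed

lemma I3:
  assumes g0: "g 0 = 1" and gn: "\<forall>n<0. g n = 0"
  shows "v * Dn (N+1) g * Dn N (sh v (sh u g)) + u * Dn (N+1) (sh v (sh u g)) * Dn N g = (u + v) * Dn (N+1) (sh u g) * Dn N (sh v g)"
proof (cases "u = v")
  case False thus ?thesis by (rule I3_ne[OF g0 gn])
next
  case True
  define F where "F w = w * Dn (N+1) g * Dn N (sh w (sh u g)) + u * Dn (N+1) (sh w (sh u g)) * Dn N g - (u + w) * Dn (N+1) (sh u g) * Dn N (sh w g)" for w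
  have cs: "continuous_on UNIV (\<lambda>w. Dn M (sh w h))" for M h
    by (rule Dn_cont) (unfold sh_def, intro continuous_intros)
  have "continuous_on UNIV F" unfolding F_def by (intro continuous_intros cs)
  moreover have "F w = 0" if "w \<noteq> u" for w
    using I3_ne[OF g0 gn, of u w N] that unfolding F_def by simp
  ultimately have "F u = 0" by (rule zero_by_cont)
  thus ?thesis using True unfolding F_def by simp
qed

lemma phi_nat_Dn: "phi_nat q N y z = Dn N (\<lambda>n. pp q n y z)"
proof (cases "N = 0")
  case True thus ?thesis unfolding phi_nat_def Dn_def by simp
next
  case False
  have e: "\<And>i j. int N - 2 * (int i + 1) + (int j + 1) + 1 = int N - 2 * int i + int j" by simp
  have "mat N N (\<lambda>(i, j). pp q (int N - 2 * (int i + 1) + (int j + 1) + 1) y z) = mat N N (\<lambda>(i,j). pp q (int N - 2 * int i + int j) y z)"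
    unfolding e ..
  thus ?thesis unfolding phi_nat_def Dn_def using False by simp
qed
lemma delta_Suc: "((M::nat) + 1) * (M + 1 + 1) div 2 = M * (M + 1) div 2 + (M + 1)"
proof -
  have h: "(M + 1) * (M + 1 + 1) = M * (M + 1) + 2 * (M + 1)" by (simp add: algebra_simps)
  have "(M * (M + 1) + 2 * (M + 1)) div 2 = (M + 1) + M * (M + 1) div 2"
    by (rule div_mult_self2) simp
  thus ?thesis unfolding h by (simp only: add.commute)
qed

context
  fixes q :: complex
  assumes q0: "q \<noteq> 0" and qn: "\<forall>n::nat. n > 0 \<longrightarrow> q ^ n \<noteq> 1"
begin

lemma q1: "q \<noteq> 1"
proof -
  have "q ^ 1 \<noteq> 1" using qn[rule_format, of 1] by simp
  thus ?thesis by simp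
qed

definition "kap = (1 - q) / q"

lemma kap_nz: "kap \<noteq> 0" using q0 q1 unfolding kap_def by simp

lemma Ly: "(\<lambda>n. pp q n (q * a) b) = sh ((1 - q) * a) (\<lambda>n. pp q n a b)"
  unfolding sh_def by (rule ext) (rule pp_y[OF qn])

lemma Lz: "(\<lambda>n. pp q n a (q * b)) = sh ((1 - q) * b) (\<lambda>n. pp q n a b)"
  unfolding sh_def by (rule ext) (rule pp_z[OF qn])

lemma Lsc: "(\<lambda>n. pp q n (q * a) (q * b)) = (\<lambda>n. q powi n * sh (- kap) (\<lambda>n. pp q n a b) n)"
proof (rule ext)
  fix n
  have "pp q n (q * a) (q * b) = q powi n * (pp q n a b + ((1 - q) / q) * pp q (n - 1) a b)"
    by (rule pp_sc[OF qn q0])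
  also have "\<dots> = q powi n * sh (- kap) (\<lambda>n. pp q n a b) n"
    unfolding sh_def kap_def by simp
  finally show "pp q n (q * a) (q * b) = q powi n * sh (- kap) (\<lambda>n. pp q n a b) n" .
qed

lemma P0: "(\<lambda>n. pp q n a b) 0 = 1" by (simp add: pp_0)
lemma Pn: "\<forall>n<0. (\<lambda>n. pp q n a b) n = 0" by (simp add: pp_neg)

lemma qy: "q * (y / q) = y" using q0 by simp

lemma alg1:
  assumes "(b - c) * X = b * A - c * B" and "b = - kap" and "c = kap * z"
  shows "(1 + z) * X = A + z * B"
proof -
  have "- kap * ((1 + z) * X - (A + z * B)) = 0" using assms by (simp add: algebra_simps)
  thus ?thesis using kap_nz by simp
qed

lemma alg2:
  assumes "v * X + u * Y = (u + v) * Z" and "u = kap * y" and "v = kap * z"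
  shows "z * X + y * Y = (y + z) * Z"
proof -
  have "kap * (z * X + y * Y - (y + z) * Z) = 0" using assms by (simp add: algebra_simps)
  thus ?thesis using kap_nz by simp
qed

lemma kq: "(1 - q) * (y / q) = kap * y" unfolding kap_def by simp

lemma powi_neg: "q powi (- int M - 1) * q ^ (M + 1) = 1"
proof -
  have "q powi (- int M - 1) = inverse q ^ (M + 1)"
    unfolding power_int_def by (simp add: nat_add_distrib)
  thus ?thesis using q0 by (simp add: power_inverse field_simps)
qed

lemma fin1:
  fixes A C Cc B X G Q P :: complex
  assumes "(1 + z) * (X * G) = A * C + z * (Cc * B)"
  shows "Q * P * A * C + Q * z * Cc * (P * B) = (1 + z) * (Q * P * X) * G"
proof -
  have "Q * P * A * C + Q * z * Cc * (P * B) = Q * P * (A * C + z * (Cc * B))" by (simp add: algebra_simps)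
  also have "\<dots> = Q * P * ((1 + z) * (X * G))" using assms by simp
  finally show ?thesis by (simp add: algebra_simps)
qed

lemma fin2:
  fixes A B C D X G Q P R :: complex
  assumes "(1 + z) * (X * G) = A * B + z * (C * D)" and "R * Q = 1"
  shows "R * z * (Q * P * C) * D + A * (P * B) = (1 + z) * X * (P * G)"
proof -
  have "R * z * (Q * P * C) * D + A * (P * B) = (R * Q) * P * z * C * D + P * (A * B)" by (simp add: algebra_simps)
  also have "\<dots> = P * (A * B + z * (C * D))" unfolding assms(2) by (simp add: algebra_simps)
  also have "\<dots> = P * ((1 + z) * (X * G))" using assms(1) by simp
  finally show ?thesis by (simp add: algebra_simps)
qed

lemma A12:
  shows "phi_nat q (M+1) y z * phi_nat q M (y/q) z + q ^ (M+1) * z * phi_nat q (M+1) (y/q) z * phi_nat q M y z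
           = (1 + z) * phi_nat q (M+1) y (q*z) * phi_nat q M (y/q) (z/q)"
    and "q powi (- int M - 1) * z * phi_nat q (M+1) y z * phi_nat q M (y/q) z + phi_nat q (M+1) (y/q) z * phi_nat q M y z
           = (1 + z) * phi_nat q (M+1) (y/q) (z/q) * phi_nat q M y (q*z)"
proof -
  define g where "g = (\<lambda>n. pp q n (y/q) (z/q))"
  define b where "b = - kap"
  define c where "c = kap * z"
  define d0 where "d0 = M * (M + 1) div 2"
  define d1 where "d1 = (M + 1) * (M + 1 + 1) div 2"
  have qd: "q ^ d1 = q ^ (M + 1) * q ^ d0" unfolding d0_def d1_def delta_Suc by (simp add: power_add)
  have g0: "g 0 = 1" and gn: "\<forall>n<0. g n = 0" unfolding g_def using P0 Pn by auto
  have Pyz: "(\<lambda>n. pp q n y z) = (\<lambda>n. q powi n * sh b g n)"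
    using Lsc[of "y/q" "z/q"] unfolding g_def b_def qy[of y] qy[of z] .
  have Pqz: "(\<lambda>n. pp q n (y/q) z) = sh c g"
    using Lz[of "y/q" "z/q"] unfolding g_def c_def qy[of z] kq[of z] .
  have Pyqz: "(\<lambda>n. pp q n y (q * z)) = (\<lambda>n. q powi n * sh b (sh c g) n)"
    using Lsc[of "y/q" z] unfolding b_def Pqz qy[of y] .
  have f1: "phi_nat q (M+1) y z = q ^ d1 * Dn (M+1) (sh b g)"
    unfolding phi_nat_Dn Pyz Dn_scale[OF q0] d1_def ..
  have f2: "phi_nat q M (y/q) z = Dn M (sh c g)" unfolding phi_nat_Dn Pqz ..
  have f3: "phi_nat q (M+1) (y/q) z = Dn (M+1) (sh c g)" unfolding phi_nat_Dn Pqz ..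
  have f4: "phi_nat q M y z = q ^ d0 * Dn M (sh b g)"
    unfolding phi_nat_Dn Pyz Dn_scale[OF q0] d0_def ..
  have f5: "phi_nat q (M+1) y (q*z) = q ^ d1 * Dn (M+1) (sh b (sh c g))"
    unfolding phi_nat_Dn Pyqz Dn_scale[OF q0] d1_def ..
  have f6: "phi_nat q M (y/q) (z/q) = Dn M g" unfolding phi_nat_Dn g_def ..
  have f7: "phi_nat q (M+1) (y/q) (z/q) = Dn (M+1) g" unfolding phi_nat_Dn g_def ..
  have f8: "phi_nat q M y (q*z) = q ^ d0 * Dn M (sh b (sh c g))"
    unfolding phi_nat_Dn Pyqz Dn_scale[OF q0] d0_def ..
  have i5: "(b - c) * Dn (M+1) (sh b (sh c g)) * Dn M g = b * Dn (M+1) (sh b g) * Dn M (sh c g) - c * Dn (M+1) (sh c g) * Dn M (sh b g)"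
    using I5[OF g0 gn, where u=b and v=c and N=M] unfolding sh_comm[of c b g] .
  have i6: "(b - c) * Dn (M+1) g * Dn M (sh b (sh c g)) = b * Dn (M+1) (sh c g) * Dn M (sh b g) - c * Dn (M+1) (sh b g) * Dn M (sh c g)"
    using I6[where u=b and v=c and N=M and g=g] unfolding sh_comm[of c b g] .
  have k5: "(1 + z) * (Dn (M+1) (sh b (sh c g)) * Dn M g) = Dn (M+1) (sh b g) * Dn M (sh c g) + z * (Dn (M+1) (sh c g) * Dn M (sh b g))"
    by (rule alg1[OF _ b_def c_def]) (use i5 in \<open>simp only: mult.assoc\<close>)
  have k6: "(1 + z) * (Dn (M+1) g * Dn M (sh b (sh c g))) = Dn (M+1) (sh c g) * Dn M (sh b g) + z * (Dn (M+1) (sh b g) * Dn M (sh c g))"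
    by (rule alg1[OF _ b_def c_def]) (use i6 in \<open>simp only: mult.assoc\<close>)
  show "phi_nat q (M+1) y z * phi_nat q M (y/q) z + q ^ (M+1) * z * phi_nat q (M+1) (y/q) z * phi_nat q M y z
           = (1 + z) * phi_nat q (M+1) y (q*z) * phi_nat q M (y/q) (z/q)"
    unfolding f1 f2 f3 f4 f5 f6 qd by (rule fin1[OF k5])
  show "q powi (- int M - 1) * z * phi_nat q (M+1) y z * phi_nat q M (y/q) z + phi_nat q (M+1) (y/q) z * phi_nat q M y z
           = (1 + z) * phi_nat q (M+1) (y/q) (z/q) * phi_nat q M y (q*z)"
    unfolding f1 f2 f3 f4 f7 f8 qd by (rule fin2[OF k6 powi_neg])
qed

lemma A34:
  shows "z * phi_nat q (M+1) (y/q) (z/q) * phi_nat q M y z + y * phi_nat q (M+1) y z * phi_nat q M (y/q) (z/q)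
           = (y + z) * phi_nat q (M+1) y (z/q) * phi_nat q M (y/q) z"
    and "y * phi_nat q (M+1) (y/q) (z/q) * phi_nat q M y z + z * phi_nat q (M+1) y z * phi_nat q M (y/q) (z/q)
           = (y + z) * phi_nat q (M+1) (y/q) z * phi_nat q M y (z/q)"
proof -
  define g where "g = (\<lambda>n. pp q n (y/q) (z/q))"
  define a where "a = kap * y"
  define c where "c = kap * z"
  have g0: "g 0 = 1" and gn: "\<forall>n<0. g n = 0" unfolding g_def using P0 Pn by auto
  have Pqz: "(\<lambda>n. pp q n (y/q) z) = sh c g"
    using Lz[of "y/q" "z/q"] unfolding g_def c_def qy[of z] kq[of z] .
  have Pyq: "(\<lambda>n. pp q n y (z/q)) = sh a g"
    using Ly[of "y/q" "z/q"] unfolding g_def a_def qy[of y] kq[of y] .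
  have Pyz: "(\<lambda>n. pp q n y z) = sh a (sh c g)"
    using Ly[of "y/q" z] unfolding a_def Pqz qy[of y] kq[of y] .
  have f1: "phi_nat q (M+1) (y/q) (z/q) = Dn (M+1) g" unfolding phi_nat_Dn g_def ..
  have f2: "phi_nat q M (y/q) (z/q) = Dn M g" unfolding phi_nat_Dn g_def ..
  have f3: "phi_nat q M y z = Dn M (sh a (sh c g))" unfolding phi_nat_Dn Pyz ..
  have f4: "phi_nat q (M+1) y z = Dn (M+1) (sh a (sh c g))" unfolding phi_nat_Dn Pyz ..
  have f5: "phi_nat q (M+1) y (z/q) = Dn (M+1) (sh a g)" unfolding phi_nat_Dn Pyq ..
  have f6: "phi_nat q M y (z/q) = Dn M (sh a g)" unfolding phi_nat_Dn Pyq ..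
  have f7: "phi_nat q (M+1) (y/q) z = Dn (M+1) (sh c g)" unfolding phi_nat_Dn Pqz ..
  have f8: "phi_nat q M (y/q) z = Dn M (sh c g)" unfolding phi_nat_Dn Pqz ..
  have i3a: "c * Dn (M+1) g * Dn M (sh a (sh c g)) + a * Dn (M+1) (sh a (sh c g)) * Dn M g = (a + c) * Dn (M+1) (sh a g) * Dn M (sh c g)"
    using I3[OF g0 gn, where u=a and v=c and N=M] unfolding sh_comm[of c a g] .
  have i3b: "a * Dn (M+1) g * Dn M (sh a (sh c g)) + c * Dn (M+1) (sh a (sh c g)) * Dn M g = (c + a) * Dn (M+1) (sh c g) * Dn M (sh a g)"
    using I3[OF g0 gn, where u=c and v=a and N=M] .
  have k3: "z * (Dn (M+1) g * Dn M (sh a (sh c g))) + y * (Dn (M+1) (sh a (sh c g)) * Dn M g) = (y + z) * (Dn (M+1) (sh a g) * Dn M (sh c g))"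
    by (rule alg2[OF _ a_def c_def]) (use i3a in \<open>simp only: mult.assoc\<close>)
  have k4: "y * (Dn (M+1) g * Dn M (sh a (sh c g))) + z * (Dn (M+1) (sh a (sh c g)) * Dn M g) = (z + y) * (Dn (M+1) (sh c g) * Dn M (sh a g))"
    by (rule alg2[OF _ c_def a_def]) (use i3b in \<open>simp only: mult.assoc\<close>)
  show "z * phi_nat q (M+1) (y/q) (z/q) * phi_nat q M y z + y * phi_nat q (M+1) y z * phi_nat q M (y/q) (z/q)
           = (y + z) * phi_nat q (M+1) y (z/q) * phi_nat q M (y/q) z"
    unfolding f1 f2 f3 f4 f5 f8 using k3 by (simp only: mult.assoc)
  show "y * phi_nat q (M+1) (y/q) (z/q) * phi_nat q M y z + z * phi_nat q (M+1) y z * phi_nat q M (y/q) (z/q)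
           = (y + z) * phi_nat q (M+1) (y/q) z * phi_nat q M y (z/q)"
    unfolding f1 f2 f3 f4 f6 f7 using k4 by (simp only: mult.assoc add.commute)
qed

end

lemma phi_pos: "phi q (int M) a b = phi_nat q M a b"
  unfolding phi_def by simp

lemma phi_pos1: "phi q (int M + 1) a b = phi_nat q (M + 1) a b"
proof -
  have e: "int M + 1 = int (M + 1)" by simp
  show ?thesis unfolding e by (rule phi_pos)
qed

lemma phi_neg: "phi q (- int M - 1) a b = (-1) ^ nat (((- int M - 1) * (- int M - 1 + 1)) div 2) * phi_nat q M a b"
proof -
  have "\<not> (- int M - 1 \<ge> 0)" by simp
  moreover have "nat (- (- int M - 1) - 1) = M" by simp
  ultimately show ?thesis unfolding phi_def by simp
qed

theorem proposition2:
  fixes q y z :: complex and N :: int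
  assumes "q \<noteq> 0" and "\<forall>n::nat. n > 0 \<longrightarrow> q ^ n \<noteq> 1"
  shows "phi q (N+1) y z * phi q N (y/q) z + q powi (N+1) * z * phi q (N+1) (y/q) z * phi q N y z
           = (1 + z) * phi q (N+1) y (q*z) * phi q N (y/q) (z/q)
         \<and> q powi (-N-1) * z * phi q (N+1) y z * phi q N (y/q) z + phi q (N+1) (y/q) z * phi q N y z
           = (1 + z) * phi q (N+1) (y/q) (z/q) * phi q N y (q*z)
         \<and> z * phi q (N+1) (y/q) (z/q) * phi q N y z + y * phi q (N+1) y z * phi q N (y/q) (z/q)
           = (y + z) * phi q (N+1) y (z/q) * phi q N (y/q) z
         \<and> y * phi q (N+1) (y/q) (z/q) * phi q N y z + z * phi q (N+1) y z * phi q N (y/q) (z/q)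
           = (y + z) * phi q (N+1) (y/q) z * phi q N y (z/q)"
proof -
  note q0 = assms(1) and qn = assms(2)
  consider (pos) M where "N = int M" | (m1) "N = -1" | (neg) K where "N = - int K - 2"
  proof (cases "N \<ge> 0")
    case True thus ?thesis using that(1)[of "nat N"] by simp
  next
    case False
    show ?thesis
    proof (cases "N = -1")
      case True thus ?thesis using that(2) by simp
    next
      case False
      with \<open>\<not> N \<ge> 0\<close> have "N = - int (nat (- N - 2)) - 2" by simp
      thus ?thesis using that(3) by blast
    qed
  qed
  thus ?thesis
  proof cases
    case pos
    have e1: "\<And>a b. phi q (N+1) a b = phi_nat q (M+1) a b" unfolding pos by (rule phi_pos1)
    have e2: "\<And>a b. phi q N a b = phi_nat q M a b" unfolding pos by (rule phi_pos)
    have e3: "q powi (N+1) = q ^ (M+1)"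
    proof -
      have "N + 1 = int (M + 1)" unfolding pos by simp
      thus ?thesis by (simp only: power_int_of_nat)
    qed
    have e4: "-N-1 = - int M - 1" unfolding pos by simp
    show ?thesis unfolding e1 e2 e3 e4
      using A12[OF q0 qn, where M=M and y=y and z=z] A34[OF q0 qn, where M=M and y=y and z=z] by blast
  next
    case m1
    have e1: "\<And>a b. phi q (N+1) a b = 1" unfolding m1 phi_def phi_nat_def by simp
    have e2: "\<And>a b. phi q N a b = 1" unfolding m1 phi_def phi_nat_def by simp
    show ?thesis unfolding e1 e2 using m1 by (simp add: algebra_simps)
  next
    case neg
    define s1 :: complex where "s1 = (-1) ^ nat (((- int K - 1) * (- int K - 1 + 1)) div 2)"
    define s0 :: complex where "s0 = (-1) ^ nat (((- int (K+1) - 1) * (- int (K+1) - 1 + 1)) div 2)"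
    have e1: "\<And>a b. phi q (N+1) a b = s1 * phi_nat q K a b"
    proof -
      fix a b
      have h: "N + 1 = - int K - 1" unfolding neg by simp
      show "phi q (N+1) a b = s1 * phi_nat q K a b" unfolding h s1_def by (rule phi_neg)
    qed
    have e2: "\<And>a b. phi q N a b = s0 * phi_nat q (K+1) a b"
    proof -
      fix a b
      have h: "N = - int (K+1) - 1" unfolding neg by simp
      show "phi q N a b = s0 * phi_nat q (K+1) a b" unfolding h s0_def by (rule phi_neg)
    qed
    have e3: "q powi (N+1) = q powi (- int K - 1)"
    proof -
      have h: "N + 1 = - int K - 1" unfolding neg by simp
      show ?thesis unfolding h ..
    qed
    have e4: "q powi (-N-1) = q ^ (K+1)"
    proof -
      have "-N-1 = int (K + 1)" unfolding neg by simp
      thus ?thesis by (simp only: power_int_of_nat)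
    qed
    note a1 = A12(1)[OF q0 qn, where M=K and y=y and z=z] and a2 = A12(2)[OF q0 qn, where M=K and y=y and z=z]
      and a3 = A34(1)[OF q0 qn, where M=K and y=y and z=z] and a4 = A34(2)[OF q0 qn, where M=K and y=y and z=z]
    have r1: "s1 * phi_nat q K y z * (s0 * phi_nat q (K+1) (y/q) z) + q powi (- int K - 1) * z * (s1 * phi_nat q K (y/q) z) * (s0 * phi_nat q (K+1) y z)
           = (1 + z) * (s1 * phi_nat q K y (q*z)) * (s0 * phi_nat q (K+1) (y/q) (z/q))"
    proof -
      have "s1 * phi_nat q K y z * (s0 * phi_nat q (K+1) (y/q) z) + q powi (- int K - 1) * z * (s1 * phi_nat q K (y/q) z) * (s0 * phi_nat q (K+1) y z)
          = s1 * s0 * (q powi (- int K - 1) * z * phi_nat q (K+1) y z * phi_nat q K (y/q) z + phi_nat q (K+1) (y/q) z * phi_nat q K y z)"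
        by (simp add: algebra_simps)
      also have "\<dots> = s1 * s0 * ((1 + z) * phi_nat q (K+1) (y/q) (z/q) * phi_nat q K y (q*z))" unfolding a2 ..
      finally show ?thesis by (simp add: algebra_simps)
    qed
    have r2: "q ^ (K+1) * z * (s1 * phi_nat q K y z) * (s0 * phi_nat q (K+1) (y/q) z) + s1 * phi_nat q K (y/q) z * (s0 * phi_nat q (K+1) y z)
           = (1 + z) * (s1 * phi_nat q K (y/q) (z/q)) * (s0 * phi_nat q (K+1) y (q*z))"
    proof -
      have "q ^ (K+1) * z * (s1 * phi_nat q K y z) * (s0 * phi_nat q (K+1) (y/q) z) + s1 * phi_nat q K (y/q) z * (s0 * phi_nat q (K+1) y z)
          = s1 * s0 * (phi_nat q (K+1) y z * phi_nat q K (y/q) z + q ^ (K+1) * z * phi_nat q (K+1) (y/q) z * phi_nat q K y z)"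
        by (simp add: algebra_simps)
      also have "\<dots> = s1 * s0 * ((1 + z) * phi_nat q (K+1) y (q*z) * phi_nat q K (y/q) (z/q))" unfolding a1 ..
      finally show ?thesis by (simp add: algebra_simps)
    qed
    have r3: "z * (s1 * phi_nat q K (y/q) (z/q)) * (s0 * phi_nat q (K+1) y z) + y * (s1 * phi_nat q K y z) * (s0 * phi_nat q (K+1) (y/q) (z/q))
           = (y + z) * (s1 * phi_nat q K y (z/q)) * (s0 * phi_nat q (K+1) (y/q) z)"
    proof -
      have "z * (s1 * phi_nat q K (y/q) (z/q)) * (s0 * phi_nat q (K+1) y z) + y * (s1 * phi_nat q K y z) * (s0 * phi_nat q (K+1) (y/q) (z/q))
          = s1 * s0 * (y * phi_nat q (K+1) (y/q) (z/q) * phi_nat q K y z + z * phi_nat q (K+1) y z * phi_nat q K (y/q) (z/q))"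
        by (simp add: algebra_simps)
      also have "\<dots> = s1 * s0 * ((y + z) * phi_nat q (K+1) (y/q) z * phi_nat q K y (z/q))" unfolding a4 ..
      finally show ?thesis by (simp add: algebra_simps)
    qed
    have r4: "y * (s1 * phi_nat q K (y/q) (z/q)) * (s0 * phi_nat q (K+1) y z) + z * (s1 * phi_nat q K y z) * (s0 * phi_nat q (K+1) (y/q) (z/q))
           = (y + z) * (s1 * phi_nat q K (y/q) z) * (s0 * phi_nat q (K+1) y (z/q))"
    proof -
      have "y * (s1 * phi_nat q K (y/q) (z/q)) * (s0 * phi_nat q (K+1) y z) + z * (s1 * phi_nat q K y z) * (s0 * phi_nat q (K+1) (y/q) (z/q))
          = s1 * s0 * (z * phi_nat q (K+1) (y/q) (z/q) * phi_nat q K y z + y * phi_nat q (K+1) y z * phi_nat q K (y/q) (z/q))"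
        by (simp add: algebra_simps)
      also have "\<dots> = s1 * s0 * ((y + z) * phi_nat q (K+1) y (z/q) * phi_nat q K (y/q) z)" unfolding a3 ..
      finally show ?thesis by (simp add: algebra_simps)
    qed
    show ?thesis unfolding e1 e2 e3 e4 using r1 r2 r3 r4 by blast
  qed
qed

end
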